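(* Let $p$ be a prime, $D$ the quaternion algebra over $\mathbb{Q}$ ramified exactly at $\{p,\infty\}$, $\mathcal{O}$ a maximal order, $U_1=\prod_q\mathrm{Stab}_{\mathrm{GU}_2(D_q)}(\mathcal{O}_q^2)\subset\mathrm{GU}_2(D_{\mathbb{A}_f})$ and $\Gamma^{(1)}=\mathrm{GU}_2(D)\cap U_1$. Then \[\Gamma^{(1)}=\mathrm{SU}_2(D)\cap\mathrm{GL}_2(\mathcal{O})=\mathrm{GU}_2(\mathcal{O}),\] where $\mathrm{GU}_2(\mathcal{O})=\{\gamma\in\mathrm{GU}_2(D)\cap M_2(\mathcal{O}):\mu(\gamma)\in\mathbb{Z}^\times\}$.
   Context: Quaternion conjugation $x\mapsto\overline{x}$; $\overline{g}^T$ is the transpose of the entrywise conjugate. $\mathrm{GU}_2(D)=\{g\in M_2(D): g\overline{g}^T=\mu(g)I,\ \mu(g)\in\mathbb{Q}^\times\}$, $\mathrm{SU}_2(D)$ its elements of similitude $1$. $\mathrm{GL}_2(\mathcal{O})$ is the group of matrices in $M_2(\mathcal{O})$ with inverse in $M_2(\mathcal{O})$. For each prime $q$, $D_q=D\otimes\mathbb{Q}_q$, $\mathcal{O}_q=\mathcal{O}\otimes\mathbb{Z}_q$, $\mathrm{GU}_2(D_q)$ defined analogously with $\mu\in\mathbb{Q}_q^\times$; $\mathrm{GU}_2(D_{\mathbb{A}_f})$ is the restricted product of the $\mathrm{GU}_2(D_q)$ with respect to $\mathrm{GU}_2(D_q)\cap\mathrm{GL}_2(\mathcal{O}_q)$,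 with $\mathrm{GU}_2(D)$ embedded diagonally. $\mathcal{O}_q^2$ consists of row vectors, with stabilizer taken under right multiplication. *)

theory Defs
  imports Complex_Main "HOL-Computational_Algebra.Primes"
begin

text \<open>Elements x0 + x1 i + x2 j + x3 k with i^2 = a, j^2 = b, k = ij = -ji.\<close>

datatype quat = Quat (q0: rat) (q1: rat) (q2: rat) (q3: rat)

definition qzero :: quat where "qzero = Quat 0 0 0 0"
definition qone :: quat where "qone = Quat 1 0 0 0"
definition qrat :: "rat \<Rightarrow> quat" where "qrat r = Quat r 0 0 0"

definition qadd :: "quat \<Rightarrow> quat \<Rightarrow> quat" where
  "qadd x y = Quat (q0 x + q0 y) (q1 x + q1 y) (q2 x + q2 y) (q3 x + q3 y)"

definition qneg :: "quat \<Rightarrow> quat" where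
  "qneg x = Quat (- q0 x) (- q1 x) (- q2 x) (- q3 x)"

definition qscal :: "rat \<Rightarrow> quat \<Rightarrow> quat" where
  "qscal r x = Quat (r * q0 x) (r * q1 x) (r * q2 x) (r * q3 x)"

definition qconj :: "quat \<Rightarrow> quat" where
  "qconj x = Quat (q0 x) (- q1 x) (- q2 x) (- q3 x)"

definition qmul :: "int \<Rightarrow> int \<Rightarrow> quat \<Rightarrow> quat \<Rightarrow> quat" where
  "qmul a b x y = (let A = rat_of_int a; B = rat_of_int b in
     Quat (q0 x * q0 y + A * q1 x * q1 y + B * q2 x * q2 y - A * B * q3 x * q3 y)
          (q0 x * q1 y + q1 x * q0 y - B * q2 x * q3 y + B * q3 x * q2 y)
          (q0 x * q2 y + q2 x * q0 y + A * q1 x * q3 y - A * q3 x * q1 y)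
          (q0 x * q3 y + q3 x * q0 y + q1 x * q2 y - q2 x * q1 y))"

text \<open>A quaternion algebra is ramified at a place v iff its reduced norm form
  x0^2 - a x1^2 - b x2^2 + ab x3^2 is anisotropic over Q_v.  At a prime q, isotropy over Q_q of an integral form
  is expressed (via compactness of Z_q^4) as the existence, for every k, of a
  primitive integral solution modulo q^k.\<close>

definition ramified_inf :: "int \<Rightarrow> int \<Rightarrow> bool" where
  "ramified_inf a b \<longleftrightarrow>
     \<not> (\<exists>x0 x1 x2 x3 :: real. (x0, x1, x2, x3) \<noteq> (0, 0, 0, 0) \<and>
          x0^2 - real_of_int a * x1^2 - real_of_int b * x2^2
            + real_of_int a * real_of_int b * x3^2 = 0)"

definition ramified_at :: "int \<Rightarrow> int \<Rightarrow> nat \<Rightarrow> bool" where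
  "ramified_at a b q \<longleftrightarrow>
     \<not> (\<forall>k::nat. \<exists>x0 x1 x2 x3 :: int.
          \<not> (int q dvd x0 \<and> int q dvd x1 \<and> int q dvd x2 \<and> int q dvd x3) \<and>
          (int q ^ k) dvd (x0^2 - a * x1^2 - b * x2^2 + a * b * x3^2))"

definition is_order :: "int \<Rightarrow> int \<Rightarrow> quat set \<Rightarrow> bool" where
  "is_order a b Ov \<longleftrightarrow>
     qone \<in> Ov \<and> (\<forall>x\<in>Ov. \<forall>y\<in>Ov. qadd x y \<in> Ov \<and> qmul a b x y \<in> Ov) \<and>
     (\<forall>x\<in>Ov. qneg x \<in> Ov) \<and>
     (\<exists>e1 e2 e3 e4.
        (\<forall>c1 c2 c3 c4 :: rat.
           qadd (qadd (qscal c1 e1) (qscal c2 e2)) (qadd (qscal c3 e3) (qscal c4 e4)) = qzero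
           \<longrightarrow> c1 = 0 \<and> c2 = 0 \<and> c3 = 0 \<and> c4 = 0) \<and>
        Ov = {qadd (qadd (qscal (of_int n1) e1) (qscal (of_int n2) e2))
                  (qadd (qscal (of_int n3) e3) (qscal (of_int n4) e4)) | n1 n2 n3 n4 :: int. True})"

definition maximal_order :: "int \<Rightarrow> int \<Rightarrow> quat set \<Rightarrow> bool" where
  "maximal_order a b Ov \<longleftrightarrow>
     is_order a b Ov \<and> (\<forall>Ov'. is_order a b Ov' \<and> Ov \<subseteq> Ov' \<longrightarrow> Ov' = Ov)"

text \<open>O_(q) = Ov \<otimes> Z_(q) = D \<inter> O_q.\<close>
definition loc_order :: "quat set \<Rightarrow> nat \<Rightarrow> quat set" where
  "loc_order Ov q = {x. \<exists>n::int. n \<noteq> 0 \<and> \<not> int q dvd n \<and> qscal (of_int n) x \<in> Ov}"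

datatype mat2 = M2 (m11: quat) (m12: quat) (m21: quat) (m22: quat)

definition mmul :: "int \<Rightarrow> int \<Rightarrow> mat2 \<Rightarrow> mat2 \<Rightarrow> mat2" where
  "mmul a b g h = M2
     (qadd (qmul a b (m11 g) (m11 h)) (qmul a b (m12 g) (m21 h)))
     (qadd (qmul a b (m11 g) (m12 h)) (qmul a b (m12 g) (m22 h)))
     (qadd (qmul a b (m21 g) (m11 h)) (qmul a b (m22 g) (m21 h)))
     (qadd (qmul a b (m21 g) (m12 h)) (qmul a b (m22 g) (m22 h)))"

definition mconjT :: "mat2 \<Rightarrow> mat2" where
  "mconjT g = M2 (qconj (m11 g)) (qconj (m21 g)) (qconj (m12 g)) (qconj (m22 g))"

definition mscal :: "rat \<Rightarrow> mat2" where
  "mscal r = M2 (qrat r) qzero qzero (qrat r)"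

definition mone :: mat2 where "mone = mscal 1"

definition entries_in :: "mat2 \<Rightarrow> quat set \<Rightarrow> bool" where
  "entries_in g S \<longleftrightarrow> m11 g \<in> S \<and> m12 g \<in> S \<and> m21 g \<in> S \<and> m22 g \<in> S"

definition vmul :: "int \<Rightarrow> int \<Rightarrow> quat \<times> quat \<Rightarrow> mat2 \<Rightarrow> quat \<times> quat" where
  "vmul a b v g =
     (qadd (qmul a b (fst v) (m11 g)) (qmul a b (snd v) (m21 g)),
      qadd (qmul a b (fst v) (m12 g)) (qmul a b (snd v) (m22 g)))"

definition GU2 :: "int \<Rightarrow> int \<Rightarrow> mat2 set" where
  "GU2 a b = {g. \<exists>\<mu>::rat. \<mu> \<noteq> 0 \<and> mmul a b g (mconjT g) = mscal \<mu>}"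

definition sim :: "int \<Rightarrow> int \<Rightarrow> mat2 \<Rightarrow> rat" where
  "sim a b g = (THE \<mu>. mmul a b g (mconjT g) = mscal \<mu>)"

definition SU2 :: "int \<Rightarrow> int \<Rightarrow> mat2 set" where
  "SU2 a b = {g \<in> GU2 a b. sim a b g = 1}"

definition GL2O :: "int \<Rightarrow> int \<Rightarrow> quat set \<Rightarrow> mat2 set" where
  "GL2O a b Ov = {g. entries_in g Ov \<and>
      (\<exists>h. entries_in h Ov \<and> mmul a b g h = mone \<and> mmul a b h g = mone)}"

definition GU2O :: "int \<Rightarrow> int \<Rightarrow> quat set \<Rightarrow> mat2 set" where
  "GU2O a b Ov = {g \<in> GU2 a b. entries_in g Ov \<and> sim a b g \<in> {1, -1}}"

text \<open>Gamma^(1) = GU_2(D) \<inter> U_1, with GU_2(D) embedded diagonally; the local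
  condition at q is that g stabilises O_q^2 under right multiplication, which
  for g with entries in D is read on D-points: O_(q)^2 g = O_(q)^2.\<close>
definition Gamma1 :: "int \<Rightarrow> int \<Rightarrow> quat set \<Rightarrow> mat2 set" where
  "Gamma1 a b Ov = {g \<in> GU2 a b. \<forall>q. prime q \<longrightarrow>
      (\<lambda>v. vmul a b v g) ` (loc_order Ov q \<times> loc_order Ov q) = loc_order Ov q \<times> loc_order Ov q}"

end

theory Submission
  imports Defs
begin

definition qn :: "int \<Rightarrow> int \<Rightarrow> quat \<Rightarrow> rat" where
  "qn a b x = q0 x ^ 2 - of_int a * q1 x ^ 2 - of_int b * q2 x ^ 2 + of_int a * of_int b * q3 x ^ 2"

lemma qmul_assoc: "qmul a b (qmul a b x y) z = qmul a b x (qmul a b y z)"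
  by (simp add: qmul_def Let_def algebra_simps)
lemma qmul_distL: "qmul a b x (qadd y z) = qadd (qmul a b x y) (qmul a b x z)"
  by (simp add: qmul_def qadd_def Let_def algebra_simps)
lemma qmul_distR: "qmul a b (qadd y z) x = qadd (qmul a b y x) (qmul a b z x)"
  by (simp add: qmul_def qadd_def Let_def algebra_simps)
lemma qmul_conj: "qmul a b x (qconj x) = qrat (qn a b x)"
  by (simp add: qmul_def qconj_def qrat_def qn_def Let_def algebra_simps power2_eq_square)
lemma qmul_conj2: "qmul a b (qconj x) x = qrat (qn a b x)"
  by (simp add: qmul_def qconj_def qrat_def qn_def Let_def algebra_simps power2_eq_square)
lemma qn_mult: "qn a b (qmul a b x y) = qn a b x * qn a b y"
  by (simp add: qmul_def qn_def Let_def algebra_simps power2_eq_square)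
lemma conj_mul: "qconj (qmul a b x y) = qmul a b (qconj y) (qconj x)"
  by (simp add: qmul_def qconj_def Let_def algebra_simps)
lemma conj_add: "qconj (qadd x y) = qadd (qconj x) (qconj y)"
  by (simp add: qadd_def qconj_def)
lemma conj_zero: "qconj qzero = qzero"
  by (simp add: qzero_def qconj_def)
lemma qadd_zero: "qadd x qzero = x" "qadd qzero x = x"
  by (simp_all add: qadd_def qzero_def)
lemma qmul_zero: "qmul a b x qzero = qzero" "qmul a b qzero x = qzero"
  by (simp_all add: qmul_def qzero_def Let_def)
lemma qmul_one: "qmul a b x qone = x" "qmul a b qone x = x"
  by (simp_all add: qmul_def qone_def Let_def)
lemma qmul_rat: "qmul a b (qrat r) x = qscal r x" "qmul a b x (qrat r) = qscal r x"
  by (simp_all add: qmul_def qrat_def qscal_def Let_def mult.commute)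
lemma qmul_scal: "qmul a b (qscal r x) y = qscal r (qmul a b x y)" "qmul a b x (qscal r y) = qscal r (qmul a b x y)"
  by (simp_all add: qmul_def qscal_def Let_def algebra_simps)
lemma qmul_neg: "qmul a b (qneg x) y = qneg (qmul a b x y)"
  by (simp add: qmul_def qneg_def Let_def algebra_simps)
lemma qn_scal: "qn a b (qscal r x) = r^2 * qn a b x"
  by (simp add: qn_def qscal_def algebra_simps power2_eq_square)
lemma qn_conj: "qn a b (qconj x) = qn a b x"
  by (simp add: qn_def qconj_def)
lemma qn_neg: "qn a b (qneg x) = qn a b x"
  by (simp add: qn_def qneg_def)
lemma qrat_inj: "qrat r = qrat s \<longleftrightarrow> r = s"
  by (simp add: qrat_def)
lemma qadd_rat: "qadd (qrat r) (qrat s) = qrat (r + s)"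
  by (simp add: qadd_def qrat_def)
lemma qadd_eq_zero: "qadd x y = qzero \<Longrightarrow> x = qneg y"
  by (cases x; cases y) (auto simp: qadd_def qzero_def qneg_def)
lemma qadd_neg_scal: "qadd (qscal r x) (qneg (qscal r x)) = qzero"
  by (simp add: qadd_def qzero_def qneg_def qscal_def)
lemma qn_one_add: "qn a b (qadd qone x) = 1 + 2 * q0 x + qn a b x"
  by (simp add: qn_def qadd_def qone_def algebra_simps power2_eq_square)
lemma conj_eq: "qconj x = qadd (qrat (2 * q0 x)) (qneg x)"
  by (simp add: qconj_def qadd_def qrat_def qneg_def)
lemma conj_conj: "qconj (qconj x) = x"
  by (simp add: qconj_def)

lemma ab_neg:
  assumes "ramified_inf a b" "a \<noteq> 0" "b \<noteq> 0"
  shows "a < 0" "b < 0"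
proof -
  show "a < 0"
  proof (rule ccontr)
    assume "\<not> a < 0"
    hence "a > 0" using assms by simp
    hence "(sqrt (real_of_int a), 1::real, 0::real, 0::real) \<noteq> (0,0,0,0) \<and>
      sqrt (real_of_int a)^2 - real_of_int a * 1^2 - real_of_int b * 0^2 + real_of_int a * real_of_int b * 0^2 = 0"
      by simp
    thus False using assms(1) unfolding ramified_inf_def by blast
  qed
  show "b < 0"
  proof (rule ccontr)
    assume "\<not> b < 0"
    hence "b > 0" using assms by simp
    hence "(sqrt (real_of_int b), 0::real, 1::real, 0::real) \<noteq> (0,0,0,0) \<and>
      sqrt (real_of_int b)^2 - real_of_int a * 0^2 - real_of_int b * 1^2 + real_of_int a * real_of_int b * 0^2 = 0"
      by simp
    thus False using assms(1) unfolding ramified_inf_def by blast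
  qed
qed

lemma qn_nonneg: assumes "a < 0" "b < 0" shows "qn a b x \<ge> 0"
proof -
  have "qn a b x = q0 x ^ 2 + of_int (-a) * q1 x ^ 2 + of_int (-b) * q2 x ^ 2 + of_int (a*b) * q3 x ^ 2"
    by (simp add: qn_def)
  moreover have "of_int (-a) * q1 x ^ 2 \<ge> (0::rat)" "of_int (-b) * q2 x ^ 2 \<ge> (0::rat)"
      "of_int (a*b) * q3 x ^ 2 \<ge> (0::rat)"
  proof -
    have "0 \<le> (of_int (-a)::rat)" "0 \<le> (of_int (-b)::rat)" "0 \<le> (of_int (a*b)::rat)"
      using assms by (simp_all add: zero_le_mult_iff)
    thus "of_int (-a) * q1 x ^ 2 \<ge> (0::rat)" "of_int (-b) * q2 x ^ 2 \<ge> (0::rat)"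
      "of_int (a*b) * q3 x ^ 2 \<ge> (0::rat)" by (metis mult_nonneg_nonneg zero_le_power2)+
  qed
  ultimately show ?thesis using zero_le_power2[of "q0 x"] by linarith
qed

lemma qn_zero: assumes "a < 0" "b < 0" "qn a b x = 0" shows "x = qzero"
proof -
  have e: "qn a b x = q0 x ^ 2 + of_int (-a) * q1 x ^ 2 + of_int (-b) * q2 x ^ 2 + of_int (a*b) * q3 x ^ 2"
    by (simp add: qn_def)
  have p: "of_int (-a) > (0::rat)" "of_int (-b) > (0::rat)" "of_int (a*b) > (0::rat)"
    using assms by (simp_all add: zero_less_mult_iff)
  have n: "of_int (-a) * q1 x ^ 2 \<ge> (0::rat)" "of_int (-b) * q2 x ^ 2 \<ge> (0::rat)"
      "of_int (a*b) * q3 x ^ 2 \<ge> (0::rat)" "q0 x ^ 2 \<ge> 0"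
    using p by (metis less_imp_le mult_nonneg_nonneg zero_le_power2)+
  have "q0 x ^ 2 = 0" "of_int (-a) * q1 x ^ 2 = (0::rat)" "of_int (-b) * q2 x ^ 2 = (0::rat)"
      "of_int (a*b) * q3 x ^ 2 = (0::rat)"
    using n e assms(3) by linarith+
  hence "q0 x = 0" "q1 x = 0" "q2 x = 0" "q3 x = 0" using p by simp_all
  thus ?thesis by (cases x) (simp add: qzero_def)
qed

lemma ord_basic:
  assumes "is_order a b Ov"
  shows "qone \<in> Ov" "\<And>x y. x \<in> Ov \<Longrightarrow> y \<in> Ov \<Longrightarrow> qadd x y \<in> Ov"
    "\<And>x y. x \<in> Ov \<Longrightarrow> y \<in> Ov \<Longrightarrow> qmul a b x y \<in> Ov"
    "\<And>x. x \<in> Ov \<Longrightarrow> qneg x \<in> Ov"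
  using assms unfolding is_order_def by blast+

lemma ord_zero: assumes "is_order a b Ov" shows "qzero \<in> Ov"
proof -
  have "qzero = qadd qone (qneg qone)" by (simp add: qzero_def qadd_def qone_def qneg_def)
  thus ?thesis using ord_basic[OF assms] by metis
qed

lemma ord_scal_nat: assumes "is_order a b Ov" "x \<in> Ov" shows "qscal (of_nat n) x \<in> Ov"
proof (induction n)
  case 0
  have "qscal (of_nat 0) x = qzero" by (simp add: qscal_def qzero_def)
  then show ?case using ord_zero[OF assms(1)] by simp
next
  case (Suc n)
  have "qscal (of_nat (Suc n)) x = qadd (qscal (of_nat n) x) x"
    by (simp add: qscal_def qadd_def algebra_simps)
  then show ?case using Suc ord_basic[OF assms(1)] assms(2) by simp
qed

lemma ord_scal_int: assumes "is_order a b Ov" "x \<in> Ov" shows "qscal (of_int k) x \<in> Ov"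
proof (cases "k \<ge> 0")
  case True
  define n where "n = nat k"
  have "k = int n" using True unfolding n_def by simp
  then show ?thesis using ord_scal_nat[OF assms, of n] by simp
next
  case False
  define n where "n = nat (-k)"
  have k: "k = - int n" using False unfolding n_def by simp
  have "qscal (of_int k) x = qneg (qscal (of_nat n) x)" using k by (simp add: qscal_def qneg_def)
  then show ?thesis using ord_scal_nat[OF assms, of n] ord_basic[OF assms(1)] by simp
qed

lemma ord_rat: assumes "is_order a b Ov" shows "qrat (of_int k) \<in> Ov"
proof -
  have "qrat (of_int k) = qscal (of_int k) qone" by (simp add: qrat_def qscal_def qone_def)
  thus ?thesis using ord_scal_int[OF assms ord_basic(1)[OF assms]] by simp
qed

definition den :: "int \<Rightarrow> quat \<Rightarrow> bool" where
  "den d x \<longleftrightarrow> of_int d * q0 x \<in> \<int> \<and> of_int d * q1 x \<in> \<int> \<and> of_int d * q2 x \<in> \<int> \<and> of_int d * q3 x \<in> \<int>"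

lemma rat_den: "\<exists>d::int. d > 0 \<and> of_int d * (r::rat) \<in> \<int>"
proof -
  obtain u v where uv: "quotient_of r = (u, v)" by (cases "quotient_of r")
  have "v > 0" using quotient_of_denom_pos[OF uv] .
  moreover have "of_int v * r = of_int u" using quotient_of_div[OF uv] \<open>v > 0\<close> by simp
  ultimately show ?thesis by (intro exI[of _ v]) simp
qed

lemma Ints_mult_d: "of_int d * (r::rat) \<in> \<int> \<Longrightarrow> of_int (d * k) * r \<in> \<int>"
proof -
  assume "of_int d * r \<in> \<int>"
  hence "of_int k * (of_int d * r) \<in> \<int>" using Ints_mult[OF Ints_of_int[of k]] by blast
  thus ?thesis by (simp add: algebra_simps)
qed

lemma den_mult: "den d x \<Longrightarrow> den (d * k) x" "den d x \<Longrightarrow> den (k * d) x"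
  unfolding den_def using Ints_mult_d by (metis mult.commute)+

lemma den_add: "den d x \<Longrightarrow> den d y \<Longrightarrow> den d (qadd x y)"
  unfolding den_def qadd_def by (simp add: distrib_left)

lemma den_scal: "den d x \<Longrightarrow> den d (qscal (of_int n) x)"
proof -
  have *: "of_int d * (of_int n * r) = of_int n * (of_int d * (r::rat))" for r by (simp add: algebra_simps)
  show "den d x \<Longrightarrow> den d (qscal (of_int n) x)"
    unfolding den_def qscal_def by (simp add: *)
qed

lemma den_exists: "\<exists>d>0. den d x"
proof -
  obtain d0 where d0: "d0 > 0" "of_int d0 * q0 x \<in> \<int>" using rat_den by blast
  obtain d1 where d1: "d1 > 0" "of_int d1 * q1 x \<in> \<int>" using rat_den by blast
  obtain d2 where d2: "d2 > 0" "of_int d2 * q2 x \<in> \<int>" using rat_den by blast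
  obtain d3 where d3: "d3 > 0" "of_int d3 * q3 x \<in> \<int>" using rat_den by blast
  note d = d0(1) d0(2) d1(1) d1(2) d2(1) d2(2) d3(1) d3(2)
  have "of_int (d0 * (d1 * d2 * d3)) * q0 x \<in> \<int>" by (rule Ints_mult_d[OF d(2)])
  moreover have "of_int (d1 * (d0 * d2 * d3)) * q1 x \<in> \<int>" by (rule Ints_mult_d[OF d(4)])
  moreover have "of_int (d2 * (d0 * d1 * d3)) * q2 x \<in> \<int>" by (rule Ints_mult_d[OF d(6)])
  moreover have "of_int (d3 * (d0 * d1 * d2)) * q3 x \<in> \<int>" by (rule Ints_mult_d[OF d(8)])
  ultimately have "den (d0 * d1 * d2 * d3) x" unfolding den_def by (simp add: ac_simps)
  moreover have "d0 * d1 * d2 * d3 > 0" using d by simp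
  ultimately show ?thesis by blast
qed

lemma ord_bounded: assumes "is_order a b Ov" shows "\<exists>d>0. \<forall>x\<in>Ov. den d x"
proof -
  obtain e1 e2 e3 e4 where O: "Ov = {qadd (qadd (qscal (of_int n1) e1) (qscal (of_int n2) e2))
                  (qadd (qscal (of_int n3) e3) (qscal (of_int n4) e4)) | n1 n2 n3 n4 :: int. True}"
    using assms unfolding is_order_def by blast
  obtain d1 where d1: "d1 > 0" "den d1 e1" using den_exists by blast
  obtain d2 where d2: "d2 > 0" "den d2 e2" using den_exists by blast
  obtain d3 where d3: "d3 > 0" "den d3 e3" using den_exists by blast
  obtain d4 where d4: "d4 > 0" "den d4 e4" using den_exists by blast
  note d = d1(1) d1(2) d2(1) d2(2) d3(1) d3(2) d4(1) d4(2)
  define D where "D = d1 * (d2 * d3 * d4)"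
  have "den D e1" unfolding D_def by (rule den_mult(1)[OF d(2)])
  moreover have "den D e2" unfolding D_def using den_mult[OF d(4), of "d1 * d3 * d4"] by (simp add: ac_simps)
  moreover have "den D e3" unfolding D_def using den_mult[OF d(6), of "d1 * d2 * d4"] by (simp add: ac_simps)
  moreover have "den D e4" unfolding D_def using den_mult[OF d(8), of "d1 * d2 * d3"] by (simp add: ac_simps)
  ultimately have "\<forall>x\<in>Ov. den D x" unfolding O by (blast intro: den_add den_scal)
  moreover have "D > 0" using d unfolding D_def by simp
  ultimately show ?thesis by blast
qed

lemma rat_pow_int:
  fixes r :: rat and d :: int
  assumes "d > 0" "\<And>k. of_int d * r ^ k \<in> \<int>"
  shows "r \<in> \<int>"
proof -
  obtain u v where uv: "quotient_of r = (u, v)" by (cases "quotient_of r")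
  have v: "v > 0" using quotient_of_denom_pos[OF uv] .
  have cop: "coprime u v" using quotient_of_coprime[OF uv] .
  have r: "r = of_int u / of_int v" using quotient_of_div[OF uv] .
  have le: "v ^ k \<le> d" for k
  proof -
    obtain m where m: "of_int d * r ^ k = of_int m" using assms(2)[of k] by (metis Ints_cases)
    hence "of_int d * of_int u ^ k / of_int v ^ k = (of_int m :: rat)" by (simp add: r power_divide)
    hence "of_int (d * u ^ k) = (of_int (m * v ^ k) :: rat)" using v by (simp add: field_simps)
    hence "d * u ^ k = m * v ^ k" by (simp only: of_int_eq_iff)
    hence "v ^ k dvd d * u ^ k" by simp
    moreover have "coprime (v ^ k) (u ^ k)" using cop by (simp add: coprime_commute)
    ultimately have "v ^ k dvd d" using coprime_dvd_mult_left_iff by blast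
    thus ?thesis using assms(1) by (simp add: zdvd_imp_le)
  qed
  have "v = 1"
  proof (rule ccontr)
    assume "v \<noteq> 1"
    hence "v \<ge> 2" using v by simp
    hence "2 ^ nat d \<le> v ^ nat d" by (simp add: power_mono)
    moreover have "int (nat d) < 2 ^ nat d" by (metis of_nat_less_two_power of_nat_numeral)
    ultimately show False using le[of "nat d"] assms(1) by simp
  qed
  thus ?thesis using r by simp
qed

lemma ord_qn_int: assumes "is_order a b Ov" "x \<in> Ov" shows "qn a b x \<in> \<int>"
proof -
  obtain d where d: "d > 0" "\<forall>x\<in>Ov. den d x" using ord_bounded[OF assms(1)] by blast
  have pw: "\<exists>y\<in>Ov. qn a b y = qn a b x ^ k" for k
  proof (induction k)
    case 0
    have "qn a b qone = 1" by (simp add: qn_def qone_def)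
    then show ?case using ord_basic(1)[OF assms(1)] by (intro bexI[of _ qone]) simp_all
  next
    case (Suc k)
    then obtain y where "y \<in> Ov" "qn a b y = qn a b x ^ k" by blast
    then show ?case using ord_basic(3)[OF assms(1) assms(2)] qn_mult[of a b x y]
      by (intro bexI[of _ "qmul a b x y"]) simp_all
  qed
  have "of_int (d^2) * qn a b x ^ k \<in> \<int>" for k
  proof -
    obtain y where y: "y \<in> Ov" "qn a b y = qn a b x ^ k" using pw by blast
    have dy: "den d y" using d y by blast
    have "of_int (d^2) * qn a b y = (of_int d * q0 y)^2 - of_int a * (of_int d * q1 y)^2
       - of_int b * (of_int d * q2 y)^2 + of_int a * of_int b * (of_int d * q3 y)^2"
      unfolding qn_def of_int_power power_mult_distrib by (simp add: algebra_simps)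
    also have "\<dots> \<in> \<int>"
    proof -
      have h0: "of_int d * q0 y \<in> \<int>" "of_int d * q1 y \<in> \<int>" "of_int d * q2 y \<in> \<int>"
        "of_int d * q3 y \<in> \<int>" using dy unfolding den_def by auto
      have h: "(of_int d * q0 y)^2 \<in> \<int>" "(of_int d * q1 y)^2 \<in> \<int>" "(of_int d * q2 y)^2 \<in> \<int>"
        "(of_int d * q3 y)^2 \<in> \<int>" using Ints_power h0 by auto
      have i: "of_int a * (of_int d * q1 y)^2 \<in> \<int>" "of_int b * (of_int d * q2 y)^2 \<in> \<int>"
        "of_int a * of_int b * (of_int d * q3 y)^2 \<in> \<int>"
        using h Ints_mult[OF Ints_of_int] Ints_mult[OF Ints_mult[OF Ints_of_int Ints_of_int]] by auto
      show ?thesis by (intro Ints_add Ints_diff h(1) i)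
    qed
    finally show ?thesis by (simp only: y(2))
  qed
  moreover have "d^2 > 0" using d(1) by simp
  ultimately show ?thesis using rat_pow_int[of "d^2"] by blast
qed

lemma ord_conj: assumes "is_order a b Ov" "x \<in> Ov" shows "qconj x \<in> Ov"
proof -
  have "qadd qone x \<in> Ov" using ord_basic[OF assms(1)] assms(2) by blast
  hence "qn a b (qadd qone x) \<in> \<int>" "qn a b x \<in> \<int>" using ord_qn_int assms by blast+
  hence "qn a b (qadd qone x) - 1 - qn a b x \<in> \<int>" by (blast intro: Ints_diff Ints_1)
  moreover have "qn a b (qadd qone x) - 1 - qn a b x = 2 * q0 x" by (simp add: qn_one_add)
  ultimately have "2 * q0 x \<in> \<int>" by simp
  then obtain m where "2 * q0 x = of_int m" by (metis Ints_cases)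
  hence "qconj x = qadd (qrat (of_int m)) (qneg x)" using conj_eq by simp
  thus ?thesis using ord_rat[OF assms(1)] ord_basic[OF assms(1)] assms(2) by simp
qed

lemma qscal_qscal: "qscal r (qscal s x) = qscal (r * s) x"
  by (simp add: qscal_def algebra_simps)
lemma qscal_add: "qscal r (qadd x y) = qadd (qscal r x) (qscal r y)"
  by (simp add: qscal_def qadd_def algebra_simps)
lemma qscal_one: "qscal 1 x = x"
  by (simp add: qscal_def)

lemma int_prime_ndvd_mult:
  assumes "prime q" "\<not> int q dvd n1" "\<not> int q dvd n2" shows "\<not> int q dvd (n1 * n2)"
proof -
  have "prime (int q)" using assms(1) by simp
  thus ?thesis using assms prime_dvd_mult_iff by blast
qed

lemma loc_sub: assumes "prime q" "x \<in> Ov" shows "x \<in> loc_order Ov q"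
proof -
  have "q > 1" using assms(1) by (rule prime_gt_1_nat)
  hence "\<not> int q dvd 1" by simp
  thus ?thesis unfolding loc_order_def using assms(2) by (intro CollectI exI[of _ 1]) (simp add: qscal_one)
qed

lemma loc_add: assumes "is_order a b Ov" "prime q" "x \<in> loc_order Ov q" "y \<in> loc_order Ov q"
  shows "qadd x y \<in> loc_order Ov q"
proof -
  obtain n1 where n1: "n1 \<noteq> 0" "\<not> int q dvd n1" "qscal (of_int n1) x \<in> Ov" using assms(3) unfolding loc_order_def by blast
  obtain n2 where n2: "n2 \<noteq> 0" "\<not> int q dvd n2" "qscal (of_int n2) y \<in> Ov" using assms(4) unfolding loc_order_def by blast
  have "qscal (of_int (n1 * n2)) (qadd x y) = qadd (qscal (of_int n2) (qscal (of_int n1) x)) (qscal (of_int n1) (qscal (of_int n2) y))"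
    by (simp add: qscal_qscal qscal_add mult.commute)
  also have "\<dots> \<in> Ov" using ord_basic(2)[OF assms(1)] ord_scal_int[OF assms(1)] n1 n2 by simp
  finally show ?thesis unfolding loc_order_def using n1 n2 int_prime_ndvd_mult[OF assms(2) n1(2) n2(2)]
    by (intro CollectI exI[of _ "n1*n2"]) simp
qed

lemma loc_mul: assumes "is_order a b Ov" "prime q" "x \<in> loc_order Ov q" "y \<in> loc_order Ov q"
  shows "qmul a b x y \<in> loc_order Ov q"
proof -
  obtain n1 where n1: "n1 \<noteq> 0" "\<not> int q dvd n1" "qscal (of_int n1) x \<in> Ov" using assms(3) unfolding loc_order_def by blast
  obtain n2 where n2: "n2 \<noteq> 0" "\<not> int q dvd n2" "qscal (of_int n2) y \<in> Ov" using assms(4) unfolding loc_order_def by blast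
  have "qscal (of_int (n1 * n2)) (qmul a b x y) = qmul a b (qscal (of_int n1) x) (qscal (of_int n2) y)"
    by (simp add: qmul_scal qscal_qscal mult.commute)
  also have "\<dots> \<in> Ov" using ord_basic(3)[OF assms(1)] n1 n2 by simp
  finally show ?thesis unfolding loc_order_def using n1 n2 int_prime_ndvd_mult[OF assms(2) n1(2) n2(2)]
    by (intro CollectI exI[of _ "n1*n2"]) simp
qed

lemma loc_qn: assumes "is_order a b Ov" "x \<in> loc_order Ov q"
  shows "\<exists>n. \<not> int q dvd n \<and> of_int n ^ 2 * qn a b x \<in> \<int>"
proof -
  obtain n where n: "\<not> int q dvd n" "qscal (of_int n) x \<in> Ov" using assms(2) unfolding loc_order_def by blast
  have "qn a b (qscal (of_int n) x) \<in> \<int>" using ord_qn_int[OF assms(1) n(2)] .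
  thus ?thesis using n(1) qn_scal by metis
qed

lemma loc_inter: assumes "is_order a b Ov" "\<forall>q. prime q \<longrightarrow> x \<in> loc_order Ov q"
  shows "x \<in> Ov"
proof -
  define I where "I = {n::int. qscal (of_int n) x \<in> Ov}"
  have Isub: "n - k * m \<in> I" if "n \<in> I" "m \<in> I" for n m k
  proof -
    have eq: "qscal (of_int (n - k * m)) x = qadd (qscal (of_int n) x) (qneg (qscal (of_int k) (qscal (of_int m) x)))"
      by (simp add: qscal_def qadd_def qneg_def algebra_simps)
    have h: "qscal (of_int n) x \<in> Ov" "qscal (of_int m) x \<in> Ov" using that unfolding I_def by auto
    have "qadd (qscal (of_int n) x) (qneg (qscal (of_int k) (qscal (of_int m) x))) \<in> Ov"
      using ord_basic(2)[OF assms(1) h(1) ord_basic(4)[OF assms(1) ord_scal_int[OF assms(1) h(2)]]] .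
    thus ?thesis unfolding I_def mem_Collect_eq eq .
  qed
  have "prime (2::nat)" by simp
  hence "x \<in> loc_order Ov 2" using assms(2) by blast
  then obtain n0 where n0: "n0 \<noteq> 0" "n0 \<in> I" unfolding loc_order_def I_def by blast
  have "n0 - 2 * n0 \<in> I" using Isub[OF n0(2) n0(2), of 2] .
  moreover have "\<bar>n0\<bar> = (if n0 \<ge> 0 then n0 else n0 - 2 * n0)" by simp
  ultimately have "\<bar>n0\<bar> \<in> I" using n0(2) by presburger
  hence ex: "\<exists>m::nat. m > 0 \<and> int m \<in> I" using n0(1) by (intro exI[of _ "nat \<bar>n0\<bar>"]) simp
  define m where "m = (LEAST m::nat. m > 0 \<and> int m \<in> I)"
  have m: "m > 0" "int m \<in> I" using LeastI_ex[OF ex] unfolding m_def by blast+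
  have mdvd: "int m dvd n" if "n \<in> I" for n
  proof -
    have r: "n - (n div int m) * int m \<in> I" using Isub[OF that m(2), of "n div int m"] .
    have "n - (n div int m) * int m = n mod int m" by (simp add: minus_div_mult_eq_mod)
    hence rI: "n mod int m \<in> I" using r by metis
    have "n mod int m = 0"
    proof (rule ccontr)
      assume "n mod int m \<noteq> 0"
      moreover have "n mod int m \<ge> 0" using m(1) by simp
      ultimately have "n mod int m > 0" by linarith
      hence pos: "nat (n mod int m) > 0" by simp
      have "n mod int m < int m" using m(1) by simp
      hence "nat (n mod int m) < m" using \<open>n mod int m \<ge> 0\<close> by (simp add: nat_less_iff)
      moreover have "int (nat (n mod int m)) \<in> I" using rI m(1) by simp
      ultimately have "\<not> (nat (n mod int m) > 0 \<and> int (nat (n mod int m)) \<in> I)"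
        using not_less_Least[of "nat (n mod int m)" "\<lambda>m. m > 0 \<and> int m \<in> I"]
        unfolding m_def by blast
      thus False using pos \<open>int (nat (n mod int m)) \<in> I\<close> by blast
    qed
    thus ?thesis by (simp add: dvd_eq_mod_eq_0)
  qed
  have "m = 1"
  proof (rule ccontr)
    assume "m \<noteq> 1"
    then obtain q where q: "prime q" "q dvd m" using prime_factor_nat by blast
    have "x \<in> loc_order Ov q" using assms(2) q(1) by blast
    then obtain n where n: "\<not> int q dvd n" "n \<in> I" unfolding loc_order_def I_def by blast
    have "int q dvd int m" using q(2) by simp
    thus False using mdvd[OF n(2)] n(1) dvd_trans by blast
  qed
  thus ?thesis using m(2) unfolding I_def by (simp add: qscal_one)
qed

lemma qadd_assoc: "qadd (qadd x y) z = qadd x (qadd y z)"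
  by (simp add: qadd_def algebra_simps)
lemma qadd_comm: "qadd x y = qadd y x"
  by (simp add: qadd_def algebra_simps)
lemma qadd_left_comm: "qadd x (qadd y z) = qadd y (qadd x z)"
  by (simp add: qadd_def algebra_simps)
lemmas qadd_ac = qadd_assoc qadd_comm qadd_left_comm

lemma vmul_assoc: "vmul a b (vmul a b v g) h = vmul a b v (mmul a b g h)"
  unfolding vmul_def mmul_def by (simp only: mat2.sel prod.sel qmul_distL qmul_distR qmul_assoc qadd_ac)

lemma vmul_mone: "vmul a b v mone = v"
  by (cases v) (simp add: vmul_def mone_def mscal_def qmul_rat qmul_zero qadd_zero qscal_one)

lemma vmul_mscal: "vmul a b v (mscal r) = (qscal r (fst v), qscal r (snd v))"
  by (simp add: vmul_def mscal_def qmul_rat qmul_zero qadd_zero)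

lemma vmul_e: "vmul a b (qone, qzero) g = (m11 g, m12 g)" "vmul a b (qzero, qone) g = (m21 g, m22 g)"
  by (simp_all add: vmul_def qmul_one qmul_zero qadd_zero)

lemma loc_vmul: assumes "is_order a b Ov" "prime q" "fst v \<in> loc_order Ov q" "snd v \<in> loc_order Ov q"
  "entries_in g (loc_order Ov q)"
  shows "fst (vmul a b v g) \<in> loc_order Ov q" "snd (vmul a b v g) \<in> loc_order Ov q"
  using assms unfolding vmul_def entries_in_def by (simp_all add: loc_add loc_mul)

lemma mmul_conjT: "mmul a b g (mconjT g) = M2
  (qadd (qmul a b (m11 g) (qconj (m11 g))) (qmul a b (m12 g) (qconj (m12 g))))
  (qadd (qmul a b (m11 g) (qconj (m21 g))) (qmul a b (m12 g) (qconj (m22 g))))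
  (qadd (qmul a b (m21 g) (qconj (m11 g))) (qmul a b (m22 g) (qconj (m12 g))))
  (qadd (qmul a b (m21 g) (qconj (m21 g))) (qmul a b (m22 g) (qconj (m22 g))))"
  by (simp add: mmul_def mconjT_def)

lemma conjT_mmul: "mmul a b (mconjT g) g = M2
  (qadd (qmul a b (qconj (m11 g)) (m11 g)) (qmul a b (qconj (m21 g)) (m21 g)))
  (qadd (qmul a b (qconj (m11 g)) (m12 g)) (qmul a b (qconj (m21 g)) (m22 g)))
  (qadd (qmul a b (qconj (m12 g)) (m11 g)) (qmul a b (qconj (m22 g)) (m21 g)))
  (qadd (qmul a b (qconj (m12 g)) (m12 g)) (qmul a b (qconj (m22 g)) (m22 g)))"
  by (simp add: mmul_def mconjT_def)

lemma mscal_eq: "M2 w x y z = mscal r \<longleftrightarrow> w = qrat r \<and> x = qzero \<and> y = qzero \<and> z = qrat r"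
  by (simp add: mscal_def)

lemma GU2_mu:
  assumes "a < 0" "b < 0" "g \<in> GU2 a b"
  shows "\<exists>\<mu>. \<mu> > 0 \<and> mmul a b g (mconjT g) = mscal \<mu> \<and> sim a b g = \<mu> \<and>
     \<mu> = qn a b (m11 g) + qn a b (m12 g)"
proof -
  obtain \<mu> where mu: "\<mu> \<noteq> 0" "mmul a b g (mconjT g) = mscal \<mu>" using assms(3) unfolding GU2_def by blast
  have "qadd (qrat (qn a b (m11 g))) (qrat (qn a b (m12 g))) = qrat \<mu>"
    using mu(2) unfolding mmul_conjT mscal_eq qmul_conj by blast
  hence e: "\<mu> = qn a b (m11 g) + qn a b (m12 g)" unfolding qadd_rat qrat_inj by simp
  have "\<mu> \<ge> 0" unfolding e using qn_nonneg[OF assms(1,2)] by (simp add: add_nonneg_nonneg)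
  hence pos: "\<mu> > 0" using mu(1) by simp
  have "sim a b g = \<mu>" unfolding sim_def
  proof (rule the_equality)
    show "mmul a b g (mconjT g) = mscal \<mu>" by (rule mu(2))
  next
    fix \<nu> assume "mmul a b g (mconjT g) = mscal \<nu>"
    hence "mscal \<nu> = mscal \<mu>" using mu(2) by simp
    thus "\<nu> = \<mu>" by (simp add: mscal_def qrat_inj)
  qed
  thus ?thesis using pos mu(2) e by blast
qed

lemma key:
  assumes ab: "a < 0" "b < 0" and g: "mmul a b g (mconjT g) = mscal 1"
  shows "mmul a b (mconjT g) g = mone"
proof -
  obtain A B C D where gg: "g = M2 A B C D" by (cases g)
  have h1: "qadd (qrat (qn a b A)) (qrat (qn a b B)) = qrat 1"
    and h3: "qadd (qmul a b A (qconj C)) (qmul a b B (qconj D)) = qzero"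
    and h2: "qadd (qrat (qn a b C)) (qrat (qn a b D)) = qrat 1"
    using g unfolding mmul_conjT mscal_eq qmul_conj gg by simp_all
  have nAB: "qn a b A + qn a b B = 1" using h1 unfolding qadd_rat qrat_inj .
  have nCD: "qn a b C + qn a b D = 1" using h2 unfolding qadd_rat qrat_inj .
  have AC: "qmul a b A (qconj C) = qneg (qmul a b B (qconj D))" using qadd_eq_zero[OF h3] .
  have "qn a b A * qn a b C = qn a b B * qn a b D"
    using arg_cong[OF AC, of "qn a b"] unfolding qn_mult qn_neg qn_conj .
  hence "qn a b A * qn a b C = (1 - qn a b A) * (1 - qn a b C)" using nAB nCD
    by (metis add_diff_cancel_left')
  hence nAC: "qn a b A + qn a b C = 1" by (simp add: algebra_simps)
  hence nAD: "qn a b D = qn a b A" using nCD by simp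
  have nBD: "qn a b B + qn a b D = 1" using nAB nAD by simp
  define \<beta> where "\<beta> = qadd (qmul a b (qconj A) B) (qmul a b (qconj C) D)"
  have "qmul a b A \<beta> = qadd (qmul a b (qmul a b A (qconj A)) B) (qmul a b (qmul a b A (qconj C)) D)"
    unfolding \<beta>_def qmul_distL qmul_assoc ..
  also have "\<dots> = qadd (qscal (qn a b A) B) (qneg (qscal (qn a b D) B))"
    unfolding AC qmul_conj qmul_rat qmul_neg qmul_assoc qmul_conj2 ..
  also have "\<dots> = qzero" unfolding nAD by (rule qadd_neg_scal)
  finally have "qmul a b A \<beta> = qzero" .
  hence "qn a b A * qn a b \<beta> = 0" using qn_mult[of a b A \<beta>] by (simp add: qn_def qzero_def)
  hence "qn a b A = 0 \<or> qn a b \<beta> = 0" by simp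
  hence b0: "\<beta> = qzero"
  proof
    assume "qn a b A = 0"
    hence "A = qzero" "D = qzero" using qn_zero[OF ab] nAD by auto
    thus "\<beta> = qzero" unfolding \<beta>_def by (simp add: conj_zero qmul_zero qadd_zero)
  next
    assume "qn a b \<beta> = 0" thus "\<beta> = qzero" using qn_zero[OF ab] by blast
  qed
  have b1: "qadd (qmul a b (qconj B) A) (qmul a b (qconj D) C) = qzero"
    using arg_cong[OF b0, of qconj] unfolding \<beta>_def conj_add conj_mul conj_conj conj_zero .
  show ?thesis unfolding conjT_mmul gg mone_def mscal_eq mat2.sel qmul_conj2 qadd_rat
    using nAC nBD b0 b1 unfolding \<beta>_def by simp
qed

lemma U_sub_S:
  assumes ab: "a < 0" "b < 0" and O: "is_order a b Ov" and g: "g \<in> GU2O a b Ov"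
  shows "g \<in> SU2 a b \<inter> GL2O a b Ov"
proof -
  have gG: "g \<in> GU2 a b" and ent: "entries_in g Ov" and s: "sim a b g \<in> {1, -1}"
    using g unfolding GU2O_def by auto
  obtain \<mu> where mu: "\<mu> > 0" "mmul a b g (mconjT g) = mscal \<mu>" "sim a b g = \<mu>"
    using GU2_mu[OF ab gG] by blast
  have m1: "\<mu> = 1" using s mu by auto
  have "g \<in> SU2 a b" using gG mu m1 unfolding SU2_def by simp
  moreover have "entries_in (mconjT g) Ov" using ent ord_conj[OF O]
    unfolding entries_in_def mconjT_def by simp
  moreover have "mmul a b g (mconjT g) = mone" using mu m1 by (simp add: mone_def)
  moreover have "mmul a b (mconjT g) g = mone" using key[OF ab] mu m1 by simp
  ultimately show ?thesis using ent unfolding GL2O_def by blast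
qed

lemma S_sub_U:
  assumes "g \<in> SU2 a b \<inter> GL2O a b Ov" shows "g \<in> GU2O a b Ov"
  using assms unfolding SU2_def GL2O_def GU2O_def by auto

lemma S_sub_G1:
  assumes O: "is_order a b Ov" and g: "g \<in> SU2 a b \<inter> GL2O a b Ov"
  shows "g \<in> Gamma1 a b Ov"
proof -
  have gG: "g \<in> GU2 a b" using g unfolding SU2_def by auto
  obtain h where ent: "entries_in g Ov" and h: "entries_in h Ov" "mmul a b g h = mone" "mmul a b h g = mone"
    using g unfolding GL2O_def by auto
  have "(\<lambda>v. vmul a b v g) ` (loc_order Ov q \<times> loc_order Ov q) = loc_order Ov q \<times> loc_order Ov q"
    if q: "prime q" for q
  proof
    have eq: "entries_in g (loc_order Ov q)" "entries_in h (loc_order Ov q)"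
      using ent h(1) loc_sub[OF q] unfolding entries_in_def by auto
    show "(\<lambda>v. vmul a b v g) ` (loc_order Ov q \<times> loc_order Ov q) \<subseteq> loc_order Ov q \<times> loc_order Ov q"
    proof
      fix u assume "u \<in> (\<lambda>v. vmul a b v g) ` (loc_order Ov q \<times> loc_order Ov q)"
      then obtain v where v: "v \<in> loc_order Ov q \<times> loc_order Ov q" "u = vmul a b v g" by blast
      show "u \<in> loc_order Ov q \<times> loc_order Ov q"
        unfolding v(2) mem_Times_iff using loc_vmul[OF O q _ _ eq(1), of v] v(1) by (simp add: mem_Times_iff)
    qed
    show "loc_order Ov q \<times> loc_order Ov q \<subseteq> (\<lambda>v. vmul a b v g) ` (loc_order Ov q \<times> loc_order Ov q)"
    proof
      fix u assume u: "u \<in> loc_order Ov q \<times> loc_order Ov q"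
      have "vmul a b (vmul a b u h) g = u" unfolding vmul_assoc h(3) vmul_mone ..
      moreover have "vmul a b u h \<in> loc_order Ov q \<times> loc_order Ov q"
        unfolding mem_Times_iff using loc_vmul[OF O q _ _ eq(2), of u] u by (simp add: mem_Times_iff)
      ultimately show "u \<in> (\<lambda>v. vmul a b v g) ` (loc_order Ov q \<times> loc_order Ov q)" by (metis image_eqI)
    qed
  qed
  thus ?thesis using gG unfolding Gamma1_def by blast
qed

lemma G1_sub_U:
  assumes ab: "a < 0" "b < 0" and O: "is_order a b Ov" and g: "g \<in> Gamma1 a b Ov"
  shows "g \<in> GU2O a b Ov"
proof -
  have gG: "g \<in> GU2 a b" and st: "\<And>q. prime q \<Longrightarrow>
      (\<lambda>v. vmul a b v g) ` (loc_order Ov q \<times> loc_order Ov q) = loc_order Ov q \<times> loc_order Ov q"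
    using g unfolding Gamma1_def by auto
  have e1: "(qone, qzero) \<in> loc_order Ov q \<times> loc_order Ov q"
    and e2: "(qzero, qone) \<in> loc_order Ov q \<times> loc_order Ov q" if "prime q" for q
    using loc_sub[OF that] ord_basic(1)[OF O] ord_zero[OF O] by auto
  have "m11 g \<in> loc_order Ov q \<and> m12 g \<in> loc_order Ov q \<and> m21 g \<in> loc_order Ov q \<and> m22 g \<in> loc_order Ov q"
    if q: "prime q" for q
  proof -
    have "vmul a b (qone, qzero) g \<in> loc_order Ov q \<times> loc_order Ov q"
      "vmul a b (qzero, qone) g \<in> loc_order Ov q \<times> loc_order Ov q"
      using st[OF q] e1[OF q] e2[OF q] by blast+
    thus ?thesis unfolding vmul_e by simp
  qed
  hence ent: "entries_in g Ov" unfolding entries_in_def using loc_inter[OF O] by blast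
  obtain \<mu> where mu: "\<mu> > 0" "mmul a b g (mconjT g) = mscal \<mu>" "sim a b g = \<mu>"
    "\<mu> = qn a b (m11 g) + qn a b (m12 g)"
    using GU2_mu[OF ab gG] by blast
  have "\<mu> \<in> \<int>" unfolding mu(4) using ent ord_qn_int[OF O] unfolding entries_in_def by (blast intro: Ints_add)
  then obtain M where M: "\<mu> = of_int M" by (metis Ints_cases)
  have Mpos: "M > 0" using mu(1) M by simp
  have "\<mu> = 1"
  proof (rule ccontr)
    assume "\<mu> \<noteq> 1"
    hence "nat M \<noteq> 1" using M Mpos by auto
    then obtain q where q: "prime q" "q dvd nat M" using prime_factor_nat by blast
    have "int q dvd int (nat M)" using q(2) by (simp only: int_dvd_int_iff)
    hence qM: "int q dvd M" using Mpos by simp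
    obtain v where v: "v \<in> loc_order Ov q \<times> loc_order Ov q" "vmul a b v g = (qone, qzero)"
      using st[OF q(1)] e1[OF q(1)] by (metis (no_types, lifting) imageE)
    obtain w where w: "w \<in> loc_order Ov q \<times> loc_order Ov q" "vmul a b w g = (qzero, qone)"
      using st[OF q(1)] e2[OF q(1)] by (metis (no_types, lifting) imageE)
    have "vmul a b (vmul a b v g) (mconjT g) = vmul a b v (mscal \<mu>)" unfolding vmul_assoc mu(2) ..
    hence v1: "qscal \<mu> (fst v) = qconj (m11 g)" unfolding v(2) vmul_e vmul_mscal by (simp add: mconjT_def)
    have "vmul a b (vmul a b w g) (mconjT g) = vmul a b w (mscal \<mu>)" unfolding vmul_assoc mu(2) ..
    hence w1: "qscal \<mu> (fst w) = qconj (m12 g)" unfolding w(2) vmul_e vmul_mscal by (simp add: mconjT_def)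
    have "\<mu> = \<mu>^2 * qn a b (fst v) + \<mu>^2 * qn a b (fst w)"
      using mu(4) arg_cong[OF v1, of "qn a b"] arg_cong[OF w1, of "qn a b"] unfolding qn_scal qn_conj by simp
    hence "\<mu> * (\<mu> * (qn a b (fst v) + qn a b (fst w))) = \<mu> * 1" by (simp add: power2_eq_square algebra_simps)
    hence inv: "\<mu> * (qn a b (fst v) + qn a b (fst w)) = 1" using mu(1) by (metis mult_left_cancel less_irrefl)
    obtain n1 where n1: "\<not> int q dvd n1" "of_int n1 ^ 2 * qn a b (fst v) \<in> \<int>"
      using loc_qn[OF O] v(1) by (metis mem_Times_iff)
    obtain n2 where n2: "\<not> int q dvd n2" "of_int n2 ^ 2 * qn a b (fst w) \<in> \<int>"
      using loc_qn[OF O] w(1) by (metis mem_Times_iff)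
    have "of_int n2 ^ 2 * (of_int n1 ^ 2 * qn a b (fst v)) + of_int n1 ^ 2 * (of_int n2 ^ 2 * qn a b (fst w)) \<in> \<int>"
      using Ints_add[OF Ints_mult[OF Ints_power[OF Ints_of_int] n1(2)] Ints_mult[OF Ints_power[OF Ints_of_int] n2(2)]] .
    also have "of_int n2 ^ 2 * (of_int n1 ^ 2 * qn a b (fst v)) + of_int n1 ^ 2 * (of_int n2 ^ 2 * qn a b (fst w))
       = of_int ((n1 * n2)^2) * (qn a b (fst v) + qn a b (fst w))"
      by (simp add: algebra_simps power_mult_distrib)
    finally obtain K where K: "of_int ((n1 * n2)^2) * (qn a b (fst v) + qn a b (fst w)) = of_int K"
      by (metis Ints_cases)
    define S where "S = qn a b (fst v) + qn a b (fst w)"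
    have "(of_int ((n1 * n2)^2) :: rat) = of_int ((n1 * n2)^2) * (\<mu> * S)" using inv unfolding S_def by simp
    also have "\<dots> = (of_int ((n1 * n2)^2) * S) * \<mu>" by (simp only: mult_ac)
    also have "\<dots> = of_int K * \<mu>" using K unfolding S_def by simp
    also have "\<dots> = of_int (K * M)" unfolding M by simp
    finally have "(n1 * n2)^2 = K * M" by (simp only: of_int_eq_iff)
    hence "int q dvd (n1 * n2)^2" using qM by simp
    moreover have "prime (int q)" using q(1) by simp
    ultimately have "int q dvd n1 * n2" using prime_dvd_power by blast
    thus False using int_prime_ndvd_mult[OF q(1) n1(1) n2(1)] by blast
  qed
  thus ?thesis using gG ent mu(3) unfolding GU2O_def by simp
qed

theorem lemma5p2:
  fixes p :: nat and a b :: int and Ov :: "quat set"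
  assumes "prime p" and "a \<noteq> 0" and "b \<noteq> 0"
    and "ramified_inf a b" and "ramified_at a b p"
    and "\<forall>q. prime q \<and> q \<noteq> p \<longrightarrow> \<not> ramified_at a b q"
    and "maximal_order a b Ov"
  shows "Gamma1 a b Ov = SU2 a b \<inter> GL2O a b Ov \<and> SU2 a b \<inter> GL2O a b Ov = GU2O a b Ov"
proof -
  have ab: "a < 0" "b < 0" using ab_neg assms(2-4) by auto
  have O: "is_order a b Ov" using assms(7) unfolding maximal_order_def by blast
  have 1: "Gamma1 a b Ov \<subseteq> GU2O a b Ov" using G1_sub_U[OF ab O] by blast
  have 2: "GU2O a b Ov \<subseteq> SU2 a b \<inter> GL2O a b Ov" using U_sub_S[OF ab O] by blast
  have 3: "SU2 a b \<inter> GL2O a b Ov \<subseteq> Gamma1 a b Ov" using S_sub_G1[OF O] by blast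
  have 4: "SU2 a b \<inter> GL2O a b Ov \<subseteq> GU2O a b Ov" using S_sub_U by blast
  show ?thesis using 1 2 3 4 by blast
qed

end
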